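(* Suppose (S) and (L) hold and: (AR1) $\operatorname{cov}(W_i^K,W_j^K)=\rho^{|i-j|}$ for some $\rho\in(-1,1)$ (with $0^0=1$); (AR2) there is $C<\infty$ with $\sup_{i\le K}|\pi_i^K|\le C/\sqrt K$ for all $K$; (AR3) $\sum_{i\ne j}\pi_i^K\pi_j^K\rho^{|i-j|}/\sum_{i=1}^K(\pi_i^K)^2$ converges to a value in $[-\infty,\infty]$; (AR4) there is $\epsilon>0$ with $\operatorname{var}(\sum_{i=1}^K\pi_i^KW_i^K)>\epsilon$ for all $K$. Then (P) holds.
   Context: For each $K$, $W^K=(W_1^K,\dots,W_K^K)$ is a random vector and $\pi^K\in\mathbb R^K$. $S\in\{0,1\}^K$ is random, independent of everything else, with moments $\operatorname{var}_S$ etc.; $d_1=\sum_iS_i$, $d_2=K-d_1$. (S) $S$ is uniform over vectors in $\{0,1\}^K$ with exactly $d_1$ ones. (L) $d_1,K\to\infty$ with $d_2/d_1\to r\in(0,\infty)$. (P): (P1) there are $0<\epsilon\le M<\infty$ with $\epsilon\le\operatorname{var}(\sum_i\pi_i^KW_i^K)\le M$ for all $K$; (P2) $\operatorname{var}_S(\sum_{i,j}S_iS_j\operatorname{cov}(\pi_i^KW_i^K,\pi_j^KW_j^K))\to0$ and the same with $S_i,S_j$ replaced by $1-S_i,1-S_j$; (P3) $\sum_i\operatorname{var}(\pi_i^KW_i^K)/\operatorname{var}(\sum_i\pi_i^KW_i^K)$ converges to a finite limit. *)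

theory Defs
  imports "HOL-Probability.Probability"
begin

definition cov :: "'a measure \<Rightarrow> ('a \<Rightarrow> real) \<Rightarrow> ('a \<Rightarrow> real) \<Rightarrow> real" where
  "cov M X Y = (\<integral>x. (X x - (\<integral>y. X y \<partial>M)) * (Y x - (\<integral>y. Y y \<partial>M)) \<partial>M)"

definition var :: "'a measure \<Rightarrow> ('a \<Rightarrow> real) \<Rightarrow> real" where
  "var M X = (\<integral>x. (X x - (\<integral>y. X y \<partial>M))^2 \<partial>M)"

text \<open>Distribution of S: uniform over 0/1 vectors of length K with exactly d ones,
  encoded by the set A = {i. S_i = 1} of indices in {1..K}.\<close>
definition Sdist :: "nat \<Rightarrow> nat \<Rightarrow> nat set measure" where
  "Sdist K d = measure_pmf (pmf_of_set {A. A \<subseteq> {1..K} \<and> card A = d})"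

end

theory Submission
  imports Defs
begin


lemma cov_scale:
  "cov M (\<lambda>x. a * X x) (\<lambda>x. b * Y x) = a * b * cov M X Y"
proof -
  have "cov M (\<lambda>x. a * X x) (\<lambda>x. b * Y x) =
     (\<integral>x. (a*b) * ((X x - (\<integral>y. X y \<partial>M)) * (Y x - (\<integral>y. Y y \<partial>M))) \<partial>M)"
    unfolding cov_def by (simp add: algebra_simps)
  also have "\<dots> = a * b * cov M X Y" unfolding cov_def by simp
  finally show ?thesis .
qed

lemma var_cov: "var M X = cov M X X"
  unfolding var_def cov_def by (simp add: power2_eq_square)

lemma int_prod:
  fixes X Y :: "'a \<Rightarrow> real"
  assumes "prob_space M"
    and "X \<in> borel_measurable M" "Y \<in> borel_measurable M"
    and "integrable M (\<lambda>x. (X x)^2)" "integrable M (\<lambda>x. (Y x)^2)"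
  shows "integrable M (\<lambda>x. X x * Y x)"
proof (rule Bochner_Integration.integrable_bound[of _ "\<lambda>x. (X x)^2 + (Y x)^2"])
  show "integrable M (\<lambda>x. (X x)^2 + (Y x)^2)" using assms by simp
  show "(\<lambda>x. X x * Y x) \<in> borel_measurable M" using assms by simp
  show "AE x in M. norm (X x * Y x) \<le> norm ((X x)^2 + (Y x)^2)"
  proof (rule AE_I2)
    fix x
    have h: "0 \<le> (\<bar>X x\<bar> - \<bar>Y x\<bar>)^2" by simp
    have "\<bar>X x * Y x\<bar> \<le> (X x)^2 + (Y x)^2"
      using h unfolding power2_eq_square abs_mult
      by (smt (verit) abs_mult_self_eq mult_nonneg_nonneg abs_ge_zero left_diff_distrib right_diff_distrib)
    then show "norm (X x * Y x) \<le> norm ((X x)^2 + (Y x)^2)" by simp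
  qed
qed

lemma var_sum:
  assumes P: "prob_space M" and fin: "finite I"
    and meas: "\<And>i. i \<in> I \<Longrightarrow> W i \<in> borel_measurable M"
    and sq: "\<And>i. i \<in> I \<Longrightarrow> integrable M (\<lambda>x. (W i x)^2)"
  shows "var M (\<lambda>x. \<Sum>i\<in>I. p i * W i x) = (\<Sum>i\<in>I. \<Sum>j\<in>I. p i * p j * cov M (W i) (W j))"
proof -
  interpret prob_space M by (rule P)
  have iW: "integrable M (W i)" if "i \<in> I" for i
    using square_integrable_imp_integrable[OF meas[OF that] sq[OF that]] .
  define \<mu> where "\<mu> i = (\<integral>y. W i y \<partial>M)" for i
  have iV: "integrable M (\<lambda>x. (W i x - \<mu> i) * (W j x - \<mu> j))" if "i \<in> I" "j \<in> I" for i j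
  proof -
    have "integrable M (\<lambda>x. W i x * W j x - \<mu> j * W i x - \<mu> i * W j x + \<mu> i * \<mu> j)"
      using int_prod[OF P meas[OF that(1)] meas[OF that(2)] sq[OF that(1)] sq[OF that(2)]] iW that
      by simp
    then show ?thesis by (simp add: algebra_simps)
  qed
  have E: "(\<integral>y. (\<Sum>i\<in>I. p i * W i y) \<partial>M) = (\<Sum>i\<in>I. p i * \<mu> i)"
    using iW by (simp add: \<mu>_def)
  have "var M (\<lambda>x. \<Sum>i\<in>I. p i * W i x) =
     (\<integral>x. (\<Sum>i\<in>I. \<Sum>j\<in>I. p i * p j * ((W i x - \<mu> i) * (W j x - \<mu> j))) \<partial>M)"
    unfolding var_def E
  proof (rule Bochner_Integration.integral_cong[OF refl])
    fix x
    have "(\<Sum>i\<in>I. p i * W i x) - (\<Sum>i\<in>I. p i * \<mu> i) = (\<Sum>i\<in>I. p i * (W i x - \<mu> i))"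
      by (simp add: sum_subtractf right_diff_distrib)
    then show "((\<Sum>i\<in>I. p i * W i x) - (\<Sum>i\<in>I. p i * \<mu> i))\<^sup>2 =
      (\<Sum>i\<in>I. \<Sum>j\<in>I. p i * p j * ((W i x - \<mu> i) * (W j x - \<mu> j)))"
      by (simp add: power2_eq_square sum_product algebra_simps)
  qed
  also have "\<dots> = (\<Sum>i\<in>I. \<Sum>j\<in>I. p i * p j * (\<integral>x. (W i x - \<mu> i) * (W j x - \<mu> j) \<partial>M))"
    using iV by (simp add: Bochner_Integration.integral_sum)
  also have "\<dots> = (\<Sum>i\<in>I. \<Sum>j\<in>I. p i * p j * cov M (W i) (W j))"
    unfolding cov_def \<mu>_def by simp
  finally show ?thesis .
qed



definition fK :: "nat \<Rightarrow> nat \<Rightarrow> nat \<Rightarrow> real" where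
  "fK K d t = (real d - real t) / (real K - real t)"
definition qK :: "nat \<Rightarrow> nat \<Rightarrow> nat \<Rightarrow> real" where
  "qK K d m = (\<Prod>t<m. fK K d t)"

lemma count_sup:
  assumes "finite U" "B \<subseteq> U" "card B \<le> d"
  shows "card {A. A \<subseteq> U \<and> card A = d \<and> B \<subseteq> A} = (card U - card B) choose (d - card B)"
proof -
  have fB: "finite B" using assms finite_subset by blast
  have "bij_betw (\<lambda>A. A - B) {A. A \<subseteq> U \<and> card A = d \<and> B \<subseteq> A} {A'. A' \<subseteq> U - B \<and> card A' = d - card B}"
  proof (rule bij_betw_byWitness[where f' = "\<lambda>A'. A' \<union> B"])
    show "\<forall>a\<in>{A. A \<subseteq> U \<and> card A = d \<and> B \<subseteq> A}. a - B \<union> B = a" by auto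
    show "\<forall>a'\<in>{A'. A' \<subseteq> U - B \<and> card A' = d - card B}. a' \<union> B - B = a'" by auto
    show "(\<lambda>A. A - B) ` {A. A \<subseteq> U \<and> card A = d \<and> B \<subseteq> A} \<subseteq> {A'. A' \<subseteq> U - B \<and> card A' = d - card B}"
    proof
      fix x assume "x \<in> (\<lambda>A. A - B) ` {A. A \<subseteq> U \<and> card A = d \<and> B \<subseteq> A}"
      then obtain A where A: "A \<subseteq> U" "card A = d" "B \<subseteq> A" "x = A - B" by auto
      have "finite A" using A assms finite_subset by blast
      then show "x \<in> {A'. A' \<subseteq> U - B \<and> card A' = d - card B}"
        using A by (auto simp: card_Diff_subset fB)
    qed
    show "(\<lambda>A'. A' \<union> B) ` {A'. A' \<subseteq> U - B \<and> card A' = d - card B} \<subseteq> {A. A \<subseteq> U \<and> card A = d \<and> B \<subseteq> A}"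
    proof
      fix x assume "x \<in> (\<lambda>A'. A' \<union> B) ` {A'. A' \<subseteq> U - B \<and> card A' = d - card B}"
      then obtain A where A: "A \<subseteq> U - B" "card A = d - card B" "x = A \<union> B" by auto
      have "finite A" using A assms finite_subset by blast
      moreover have "A \<inter> B = {}" using A by auto
      ultimately have "card x = d" using A assms fB by (simp add: card_Un_disjoint)
      then show "x \<in> {A. A \<subseteq> U \<and> card A = d \<and> B \<subseteq> A}" using A assms by auto
    qed
  qed
  then have "card {A. A \<subseteq> U \<and> card A = d \<and> B \<subseteq> A} = card {A'. A' \<subseteq> U - B \<and> card A' = d - card B}"
    by (rule bij_betw_same_card)
  also have "\<dots> = card (U - B) choose (d - card B)"
    using assms by (simp add: n_subsets)
  also have "card (U - B) = card U - card B" using assms fB by (simp add: card_Diff_subset)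
  finally show ?thesis .
qed

lemma count_zero:
  assumes "finite U" "card B > d"
  shows "{A. A \<subseteq> U \<and> card A = d \<and> B \<subseteq> A} = {}"
proof -
  have "False" if "A \<subseteq> U" "card A = d" "B \<subseteq> A" for A
  proof -
    have "finite A" using that assms finite_subset by blast
    then have "card B \<le> card A" using that card_mono by blast
    then show False using that assms by simp
  qed
  then show ?thesis by blast
qed

lemma binom_prod:
  assumes "m \<le> d" "d \<le> K"
  shows "real ((K - m) choose (d - m)) = real (K choose d) * qK K d m"
  using assms(1)
proof (induction m)
  case 0
  then show ?case by (simp add: qK_def)
next
  case (Suc m)
  then have IH: "real ((K - m) choose (d - m)) = real (K choose d) * qK K d m" by simp
  have pos: "0 < d - m" using Suc by simp
  have "(d - m) * ((K - m) choose (d - m)) = (K - m) * ((K - m - 1) choose (d - m - 1))"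
    using times_binomial_minus1_eq[OF pos, of "K - m"] by simp
  then have e: "real (d - m) * real ((K - m) choose (d - m)) = real (K - m) * real ((K - Suc m) choose (d - Suc m))"
    unfolding of_nat_mult[symmetric] of_nat_eq_iff by (simp add: diff_diff_add)
  have Km: "real (K - m) > 0" using Suc assms by simp
  have X: "real ((K - Suc m) choose (d - Suc m)) = real (d - m) * real ((K - m) choose (d - m)) / real (K - m)"
    using e Km by (simp add: field_simps)
  have "qK K d (Suc m) = qK K d m * (real (d - m) / real (K - m))"
    using Suc assms by (simp add: qK_def fK_def of_nat_diff)
  then show ?case unfolding X IH by simp
qed

lemma q_eq:
  assumes "B \<subseteq> {1..K}" "d \<le> K"
  shows "real (card {A. A \<subseteq> {1..K} \<and> card A = d \<and> B \<subseteq> A}) / real (K choose d) = qK K d (card B)"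
proof (cases "card B \<le> d")
  case True
  have "card {A. A \<subseteq> {1..K} \<and> card A = d \<and> B \<subseteq> A} = (K - card B) choose (d - card B)"
    using count_sup[of "{1..K}" B d] True assms by simp
  moreover have "real (K choose d) > 0" using assms by simp
  ultimately show ?thesis using binom_prod[OF True assms(2)] by simp
next
  case False
  then have "{A. A \<subseteq> {1..K} \<and> card A = d \<and> B \<subseteq> A} = {}" using count_zero[of "{1..K}" d B] by simp
  moreover have "qK K d (card B) = 0" unfolding qK_def
  proof (rule prod_zero)
    show "\<exists>a\<in>{..<card B}. fK K d a = 0" using False by (intro bexI[of _ d]) (auto simp: fK_def)
  qed simp
  ultimately show ?thesis by simp
qed



abbreviation SS :: "nat \<Rightarrow> nat \<Rightarrow> nat set set" where
  "SS K d \<equiv> {A. A \<subseteq> {1..K} \<and> card A = d}"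

lemma SS_fin: "finite (SS K d)"
  by (rule finite_subset[of _ "Pow {1..K}"]) auto

lemma SS_ne: "d \<le> K \<Longrightarrow> SS K d \<noteq> {}"
proof -
  assume "d \<le> K"
  have "card (SS K d) = K choose d" by (simp add: n_subsets)
  moreover have "K choose d > 0" using \<open>d \<le> K\<close> by simp
  ultimately show ?thesis by (metis card.empty less_irrefl)
qed

lemma Sdist_integrable: "d \<le> K \<Longrightarrow> integrable (Sdist K d) (f :: nat set \<Rightarrow> real)"
  unfolding Sdist_def
  by (rule integrable_measure_pmf_finite) (use SS_fin[of K d] SS_ne[of d K] in simp)

lemma E_ind:
  assumes "B \<subseteq> {1..K}" "d \<le> K"
  shows "(\<integral>A. of_bool (B \<subseteq> A) \<partial>Sdist K d) = qK K d (card B)"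
proof -
  have "(\<integral>A. of_bool (B \<subseteq> A) \<partial>Sdist K d) = (\<integral>A. indicator {A. B \<subseteq> A} A \<partial>Sdist K d)"
    by (simp add: indicator_def)
  also have "\<dots> = measure (Sdist K d) {A. B \<subseteq> A}"
    by (simp add: Sdist_def)
  also have "\<dots> = real (card (SS K d \<inter> {A. B \<subseteq> A})) / real (card (SS K d))"
    unfolding Sdist_def using SS_fin SS_ne[OF assms(2)] by (simp add: measure_pmf_of_set)
  also have "SS K d \<inter> {A. B \<subseteq> A} = {A. A \<subseteq> {1..K} \<and> card A = d \<and> B \<subseteq> A}" by auto
  also have "card (SS K d) = K choose d" by (simp add: n_subsets)
  finally show ?thesis using q_eq[OF assms] by simp
qed

lemma of_bool_conj: "(of_bool (P \<and> Q) :: real) = of_bool P * of_bool Q"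
  by simp

lemma E2:
  assumes "i \<in> {1..K}" "j \<in> {1..K}" "d \<le> K"
  shows "(\<integral>A. of_bool (i \<in> A) * of_bool (j \<in> A) \<partial>Sdist K d) = qK K d (card {i,j})"
  using E_ind[of "{i,j}" K d] assms by (simp add: of_bool_conj)

lemma E4:
  assumes "i \<in> {1..K}" "j \<in> {1..K}" "k \<in> {1..K}" "l \<in> {1..K}" "d \<le> K"
  shows "(\<integral>A. of_bool (i \<in> A) * (of_bool (j \<in> A) * (of_bool (k \<in> A) * of_bool (l \<in> A))) \<partial>Sdist K d) = qK K d (card {i,j,k,l})"
  using E_ind[of "{i,j,k,l}" K d] assms by (simp add: of_bool_conj)

lemma var_T_formula:
  fixes c :: "nat \<Rightarrow> nat \<Rightarrow> real"
  assumes "d \<le> K"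
  defines "I \<equiv> {1..K}"
  shows "var (Sdist K d) (\<lambda>A. \<Sum>i\<in>I. \<Sum>j\<in>I. of_bool (i \<in> A) * of_bool (j \<in> A) * c i j) =
    (\<Sum>i\<in>I. \<Sum>j\<in>I. \<Sum>k\<in>I. \<Sum>l\<in>I. c i j * c k l *
        (qK K d (card {i,j,k,l}) - qK K d (card {i,j}) * qK K d (card {k,l})))"
proof -
  interpret P: prob_space "Sdist K d" unfolding Sdist_def by (rule prob_space_measure_pmf)
  define T where "T A = (\<Sum>i\<in>I. \<Sum>j\<in>I. of_bool (i \<in> A) * of_bool (j \<in> A) * c i j)" for A
  have "var (Sdist K d) T = P.variance T" unfolding var_def by simp
  also have "\<dots> = P.expectation (\<lambda>A. (T A)^2) - (P.expectation T)^2"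
    by (rule P.variance_eq) (use Sdist_integrable[OF assms(1)] in auto)
  also have "P.expectation T = (\<Sum>i\<in>I. \<Sum>j\<in>I. c i j * qK K d (card {i,j}))"
  proof -
    have "P.expectation T = (\<Sum>i\<in>I. \<Sum>j\<in>I. c i j * P.expectation (\<lambda>A. of_bool (i \<in> A) * of_bool (j \<in> A)))"
      unfolding T_def using Sdist_integrable[OF assms(1)]
      by (simp add: Bochner_Integration.integral_sum mult.commute)
    also have "\<dots> = (\<Sum>i\<in>I. \<Sum>j\<in>I. c i j * qK K d (card {i,j}))"
      by (intro sum.cong refl) (simp add: E2 assms I_def)
    finally show ?thesis .
  qed
  also have "P.expectation (\<lambda>A. (T A)^2) = (\<Sum>i\<in>I. \<Sum>j\<in>I. \<Sum>k\<in>I. \<Sum>l\<in>I. c i j * c k l * qK K d (card {i,j,k,l}))"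
  proof -
    have sq: "(T A)^2 = (\<Sum>i\<in>I. \<Sum>j\<in>I. \<Sum>k\<in>I. \<Sum>l\<in>I. (c i j * c k l) * (of_bool (i \<in> A) * (of_bool (j \<in> A) * (of_bool (k \<in> A) * of_bool (l \<in> A)))))" for A
      unfolding T_def power2_eq_square sum_distrib_right sum_distrib_left
      by (intro sum.cong refl) (auto simp: mult_ac)
    have "P.expectation (\<lambda>A. (T A)^2) = (\<Sum>i\<in>I. \<Sum>j\<in>I. \<Sum>k\<in>I. \<Sum>l\<in>I. (c i j * c k l) * P.expectation (\<lambda>A. of_bool (i \<in> A) * (of_bool (j \<in> A) * (of_bool (k \<in> A) * of_bool (l \<in> A)))))"
      unfolding sq using Sdist_integrable[OF assms(1)]
      by (simp only: Bochner_Integration.integral_sum Bochner_Integration.integral_mult_right_zero)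
    also have "\<dots> = (\<Sum>i\<in>I. \<Sum>j\<in>I. \<Sum>k\<in>I. \<Sum>l\<in>I. c i j * c k l * qK K d (card {i,j,k,l}))"
      by (intro sum.cong refl) (simp add: E4 assms I_def)
    finally show ?thesis .
  qed
  also have "(\<Sum>i\<in>I. \<Sum>j\<in>I. c i j * qK K d (card {i,j}))^2 =
     (\<Sum>i\<in>I. \<Sum>j\<in>I. \<Sum>k\<in>I. \<Sum>l\<in>I. c i j * c k l * (qK K d (card {i,j}) * qK K d (card {k,l})))"
    unfolding power2_eq_square sum_distrib_right sum_distrib_left
    by (intro sum.cong refl) (auto simp: mult_ac)
  finally show ?thesis unfolding T_def by (simp add: sum_subtractf right_diff_distrib)
qed



definition DK :: "nat \<Rightarrow> real" where "DK K = 3 * real K / (real K - 3)^2"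

lemma abs_frac_le1:
  fixes x y :: real
  assumes "0 < y" "-y \<le> x" "x \<le> y"
  shows "\<bar>x / y\<bar> \<le> 1"
proof -
  have a: "\<bar>x\<bar> \<le> y" using assms by (simp add: abs_le_iff)
  have "\<bar>x / y\<bar> = \<bar>x\<bar> / y" using assms(1) by (simp add: abs_divide)
  also have "\<dots> \<le> y / y" using a assms(1) by (intro divide_right_mono) auto
  also have "\<dots> = 1" using assms(1) by simp
  finally show ?thesis .
qed

lemma fK_abs:
  assumes "t \<le> 3" "6 \<le> K" "d \<le> K"
  shows "\<bar>fK K d t\<bar> \<le> 1"
  unfolding fK_def
proof (rule abs_frac_le1)
  show "0 < real K - real t" using assms by simp
  show "- (real K - real t) \<le> real d - real t" using assms by simp
  show "real d - real t \<le> real K - real t" using assms by simp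
qed

lemma fK_diff:
  assumes "s \<le> 3" "t \<le> 3" "6 \<le> K" "d \<le> K"
  shows "\<bar>fK K d s - fK K d t\<bar> \<le> DK K"
proof -
  have k6: "real K \<ge> 6" using assms by simp
  have ps: "real K - real s \<ge> real K - 3" "real K - real t \<ge> real K - 3" using assms by auto
  have ps0: "real K - real s \<noteq> 0" "real K - real t \<noteq> 0" using ps k6 by auto
  have eq0: "fK K d s - fK K d t = ((real d - real s) * (real K - real t) - (real d - real t) * (real K - real s)) / ((real K - real s) * (real K - real t))"
    unfolding fK_def using ps0 by (rule diff_frac_eq)
  have num: "(real d - real s) * (real K - real t) - (real d - real t) * (real K - real s) = (real t - real s) * (real K - real d)"
    by (simp add: algebra_simps)
  have n1: "\<bar>(real t - real s) * (real K - real d)\<bar> \<le> 3 * real K"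
  proof -
    have "\<bar>real t - real s\<bar> \<le> 3" using assms by linarith
    moreover have "\<bar>real K - real d\<bar> \<le> real K" using assms by simp
    ultimately show ?thesis unfolding abs_mult by (intro mult_mono) auto
  qed
  have d1: "(real K - 3)^2 \<le> (real K - real s) * (real K - real t)"
    unfolding power2_eq_square using ps k6 by (intro mult_mono) auto
  have dpos: "0 < (real K - 3)^2" using k6 by simp
  have "\<bar>fK K d s - fK K d t\<bar> = \<bar>(real t - real s) * (real K - real d)\<bar> / \<bar>(real K - real s) * (real K - real t)\<bar>"
    unfolding eq0 num abs_divide ..
  also have "\<bar>(real K - real s) * (real K - real t)\<bar> = (real K - real s) * (real K - real t)"
    using ps k6 by (intro abs_of_nonneg mult_nonneg_nonneg) auto
  also have "\<bar>(real t - real s) * (real K - real d)\<bar> / ((real K - real s) * (real K - real t)) \<le> 3 * real K / (real K - 3)^2"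
    using n1 d1 dpos by (intro frac_le) auto
  finally show ?thesis unfolding DK_def .
qed

lemma DK_nonneg: "DK K \<ge> 0" unfolding DK_def by simp

lemma qK_abs:
  assumes "m \<le> 4" "6 \<le> K" "d \<le> K"
  shows "\<bar>qK K d m\<bar> \<le> 1"
  unfolding qK_def abs_prod using assms fK_abs
  by (intro prod_le_1) auto

lemma qK_0: "qK K d 0 = 1" by (simp add: qK_def)
lemma qK_Suc: "qK K d (Suc m) = qK K d m * fK K d m" by (simp add: qK_def)
lemma qK_1: "qK K d 1 = fK K d 0" by (simp add: qK_def)
lemma qK_2: "qK K d 2 = fK K d 0 * fK K d 1" by (simp add: qK_def eval_nat_numeral lessThan_Suc)
lemma qK_3: "qK K d 3 = fK K d 0 * fK K d 1 * fK K d 2" by (simp add: qK_def eval_nat_numeral lessThan_Suc)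
lemma qK_4: "qK K d 4 = fK K d 0 * fK K d 1 * fK K d 2 * fK K d 3"
  by (simp add: qK_def lessThan_Suc eval_nat_numeral)

lemma prod_diff_bound:
  fixes x1 x2 y1 y2 :: real
  assumes "\<bar>x1\<bar> \<le> 1" "\<bar>y2\<bar> \<le> 1"
  shows "\<bar>x1 * x2 - y1 * y2\<bar> \<le> \<bar>x1 - y1\<bar> + \<bar>x2 - y2\<bar>"
proof -
  have "x1 * x2 - y1 * y2 = x1 * (x2 - y2) + (x1 - y1) * y2" by (simp add: algebra_simps)
  then have "\<bar>x1 * x2 - y1 * y2\<bar> \<le> \<bar>x1\<bar> * \<bar>x2 - y2\<bar> + \<bar>x1 - y1\<bar> * \<bar>y2\<bar>"
    by (simp add: abs_mult[symmetric] abs_triangle_ineq)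
  also have "\<dots> \<le> 1 * \<bar>x2 - y2\<bar> + \<bar>x1 - y1\<bar> * 1"
    using assms by (intro add_mono mult_mono) auto
  finally show ?thesis by simp
qed

lemma q_disj:
  assumes "a \<in> {1,2}" "b \<in> {1,2}" "6 \<le> K" "d \<le> K"
  shows "\<bar>qK K d (a + b) - qK K d a * qK K d b\<bar> \<le> 2 * DK K"
proof -
  have fa: "\<bar>fK K d t\<bar> \<le> 1" if "t \<le> 3" for t using fK_abs[OF that assms(3,4)] .
  have fd: "\<bar>fK K d s - fK K d t\<bar> \<le> DK K" if "s \<le> 3" "t \<le> 3" for s t
    using fK_diff[OF that assms(3,4)] .
  have D0: "DK K \<ge> 0" by (rule DK_nonneg)
  have f01: "\<bar>fK K d 0 * fK K d 1\<bar> \<le> 1"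
    using fa[of 0] fa[of 1] by (simp add: abs_mult mult_le_one)
  consider "a = 1" "b = 1" | "a = 1" "b = 2" | "a = 2" "b = 1" | "a = 2" "b = 2" using assms by auto
  then show ?thesis
  proof cases
    case 1
    have "qK K d (a + b) - qK K d a * qK K d b = fK K d 0 * (fK K d 1 - fK K d 0)"
      using 1 by (simp add: qK_0 qK_Suc eval_nat_numeral algebra_simps)
    also have "\<bar>\<dots>\<bar> \<le> 1 * DK K"
      unfolding abs_mult using fa[of 0] fd[of 1 0] by (intro mult_mono) auto
    finally show ?thesis using D0 by simp
  next
    case 2
    have "qK K d (a + b) - qK K d a * qK K d b = (fK K d 0 * fK K d 1) * (fK K d 2 - fK K d 0)"
      using 2 by (simp add: qK_0 qK_Suc eval_nat_numeral algebra_simps)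
    also have "\<bar>\<dots>\<bar> \<le> 1 * DK K"
      unfolding abs_mult[of "fK K d 0 * fK K d 1"] using f01 fd[of 2 0] by (intro mult_mono) auto
    finally show ?thesis using D0 by simp
  next
    case 3
    have "qK K d (a + b) - qK K d a * qK K d b = (fK K d 0 * fK K d 1) * (fK K d 2 - fK K d 0)"
      using 3 by (simp add: qK_0 qK_Suc eval_nat_numeral algebra_simps)
    also have "\<bar>\<dots>\<bar> \<le> 1 * DK K"
      unfolding abs_mult[of "fK K d 0 * fK K d 1"] using f01 fd[of 2 0] by (intro mult_mono) auto
    finally show ?thesis using D0 by simp
  next
    case 4
    have "qK K d (a + b) - qK K d a * qK K d b = (fK K d 0 * fK K d 1) * (fK K d 2 * fK K d 3 - fK K d 0 * fK K d 1)"
      using 4 by (simp add: qK_0 qK_Suc eval_nat_numeral algebra_simps)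
    also have "\<bar>\<dots>\<bar> \<le> 1 * (DK K + DK K)"
    proof -
      have "\<bar>fK K d 2 * fK K d 3 - fK K d 0 * fK K d 1\<bar> \<le> \<bar>fK K d 2 - fK K d 0\<bar> + \<bar>fK K d 3 - fK K d 1\<bar>"
        using fa[of 2] fa[of 1] by (intro prod_diff_bound) auto
      also have "\<dots> \<le> DK K + DK K" using fd[of 2 0] fd[of 3 1] by simp
      finally show ?thesis
        unfolding abs_mult[of "fK K d 0 * fK K d 1"] using f01 by (intro mult_mono) auto
    qed
    finally show ?thesis by simp
  qed
qed

lemma card2: "card {i,j} \<in> {1,2}"
  by (cases "i = j") auto

lemma e_bound:
  assumes "i \<in> {1..K}" "j \<in> {1..K}" "k \<in> {1..K}" "l \<in> {1..K}" "6 \<le> K" "d \<le> K"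
  shows "\<bar>qK K d (card {i,j,k,l}) - qK K d (card {i,j}) * qK K d (card {k,l})\<bar>
          \<le> 2 * of_bool ({i,j} \<inter> {k,l} \<noteq> {}) + 2 * DK K"
proof (cases "{i,j} \<inter> {k,l} = {}")
  case True
  have u: "{i,j,k,l} = {i,j} \<union> {k,l}" by auto
  have c: "card {i,j,k,l} = card {i,j} + card {k,l}"
    unfolding u using True by (intro card_Un_disjoint) auto
  have "\<bar>qK K d (card {i,j} + card {k,l}) - qK K d (card {i,j}) * qK K d (card {k,l})\<bar> \<le> 2 * DK K"
    by (rule q_disj[OF card2 card2 assms(5,6)])
  moreover have z: "({i,j} \<inter> {k,l} \<noteq> {}) = False" using True by blast
  ultimately show ?thesis unfolding c z of_bool_eq(1) by linarith
next
  case False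
  have c4: "card {i,j,k,l} \<le> 4" using card_length[of "[i,j,k,l]"] by simp
  have c2: "card {i,j} \<le> 4" "card {k,l} \<le> 4" using card2[of i j] card2[of k l] by auto
  have "\<bar>qK K d (card {i,j,k,l}) - qK K d (card {i,j}) * qK K d (card {k,l})\<bar>
     \<le> \<bar>qK K d (card {i,j,k,l})\<bar> + \<bar>qK K d (card {i,j})\<bar> * \<bar>qK K d (card {k,l})\<bar>"
    unfolding abs_mult[symmetric] by (rule abs_triangle_ineq4)
  also have "\<dots> \<le> 1 + 1 * 1"
    using qK_abs[OF c4 assms(5,6)] qK_abs[OF c2(1) assms(5,6)] qK_abs[OF c2(2) assms(5,6)]
    by (intro add_mono mult_mono) auto
  finally show ?thesis using False DK_nonneg[of K] by simp
qed



lemma delta_sum: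
  fixes F :: "nat \<Rightarrow> real"
  assumes "finite I" "i \<in> I"
  shows "(\<Sum>k\<in>I. of_bool (k = i) * F k) = F i"
proof -
  have "(\<Sum>k\<in>I. of_bool (k = i) * F k) = (\<Sum>k\<in>I. if k = i then F k else 0)"
    by (intro sum.cong) auto
  also have "\<dots> = F i" using assms by (simp add: sum.delta)
  finally show ?thesis .
qed

lemma ov_sum:
  fixes g :: "nat \<Rightarrow> nat \<Rightarrow> real"
  assumes fin: "finite I" and ij: "i \<in> I" "j \<in> I"
    and g0: "\<And>k l. k \<in> I \<Longrightarrow> l \<in> I \<Longrightarrow> g k l \<ge> 0"
    and row: "\<And>k. k \<in> I \<Longrightarrow> (\<Sum>l\<in>I. g k l) \<le> R"
    and col: "\<And>l. l \<in> I \<Longrightarrow> (\<Sum>k\<in>I. g k l) \<le> R"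
  shows "(\<Sum>k\<in>I. \<Sum>l\<in>I. g k l * of_bool ({i,j} \<inter> {k,l} \<noteq> {})) \<le> 4 * R"
proof -
  have "(\<Sum>k\<in>I. \<Sum>l\<in>I. g k l * of_bool ({i,j} \<inter> {k,l} \<noteq> {})) \<le>
        (\<Sum>k\<in>I. \<Sum>l\<in>I. of_bool (k = i) * g k l + of_bool (k = j) * g k l
                         + of_bool (l = i) * g k l + of_bool (l = j) * g k l)"
  proof (intro sum_mono)
    fix k l assume "k \<in> I" "l \<in> I"
    then have "g k l \<ge> 0" by (rule g0)
    then show "g k l * of_bool ({i,j} \<inter> {k,l} \<noteq> {}) \<le> of_bool (k = i) * g k l + of_bool (k = j) * g k l
                         + of_bool (l = i) * g k l + of_bool (l = j) * g k l"
      by auto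
  qed
  also have "\<dots> = (\<Sum>k\<in>I. \<Sum>l\<in>I. of_bool (k = i) * g k l) + (\<Sum>k\<in>I. \<Sum>l\<in>I. of_bool (k = j) * g k l)
      + (\<Sum>k\<in>I. \<Sum>l\<in>I. of_bool (l = i) * g k l) + (\<Sum>k\<in>I. \<Sum>l\<in>I. of_bool (l = j) * g k l)"
    by (simp only: sum.distrib)
  also have "\<dots> = (\<Sum>l\<in>I. g i l) + (\<Sum>l\<in>I. g j l) + (\<Sum>k\<in>I. g k i) + (\<Sum>k\<in>I. g k j)"
  proof -
    have A: "(\<Sum>k\<in>I. \<Sum>l\<in>I. of_bool (k = m) * g k l) = (\<Sum>l\<in>I. g m l)" if "m \<in> I" for m
    proof -
      have "(\<Sum>k\<in>I. \<Sum>l\<in>I. of_bool (k = m) * g k l) = (\<Sum>k\<in>I. of_bool (k = m) * (\<Sum>l\<in>I. g k l))"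
        by (simp only: sum_distrib_left)
      also have "\<dots> = (\<Sum>l\<in>I. g m l)" by (rule delta_sum[OF fin that])
      finally show ?thesis .
    qed
    have B: "(\<Sum>k\<in>I. \<Sum>l\<in>I. of_bool (l = m) * g k l) = (\<Sum>k\<in>I. g k m)" if "m \<in> I" for m
      by (rule sum.cong[OF refl], rule delta_sum[OF fin that])
    show ?thesis using A[OF ij(1)] A[OF ij(2)] B[OF ij(1)] B[OF ij(2)] by simp
  qed
  also have "\<dots> \<le> R + R + R + R" using row col ij by (intro add_mono) auto
  finally show ?thesis by simp
qed

lemma var_bound:
  fixes c g :: "nat \<Rightarrow> nat \<Rightarrow> real"
  assumes K6: "6 \<le> K" and dK: "d \<le> K"
    and cg: "\<And>i j. i \<in> {1..K} \<Longrightarrow> j \<in> {1..K} \<Longrightarrow> \<bar>c i j\<bar> \<le> g i j"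
    and row: "\<And>k. k \<in> {1..K} \<Longrightarrow> (\<Sum>l\<in>{1..K}. g k l) \<le> R"
    and col: "\<And>l. l \<in> {1..K} \<Longrightarrow> (\<Sum>k\<in>{1..K}. g k l) \<le> R"
  shows "var (Sdist K d) (\<lambda>A. \<Sum>i\<in>{1..K}. \<Sum>j\<in>{1..K}. of_bool (i \<in> A) * of_bool (j \<in> A) * c i j)
          \<le> 8 * real K * R^2 + 2 * DK K * (real K * R)^2"
proof -
  define I where "I = {1..K}"
  have fin: "finite I" unfolding I_def by simp
  have g0: "g i j \<ge> 0" if "i \<in> I" "j \<in> I" for i j using cg[of i j] that I_def by force
  define e where "e i j k l = qK K d (card {i,j,k,l}) - qK K d (card {i,j}) * qK K d (card {k,l})" for i j k l :: nat
  define ov where "ov i j k l = (of_bool ({i,j} \<inter> {k,l} \<noteq> {}) :: real)" for i j k l :: nat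
  have R0: "R \<ge> 0"
  proof -
    have "1 \<in> I" using K6 I_def by simp
    then have "(\<Sum>l\<in>I. g 1 l) \<le> R" using row I_def by simp
    moreover have "(\<Sum>l\<in>I. g 1 l) \<ge> 0" using g0 \<open>1 \<in> I\<close> by (intro sum_nonneg) auto
    ultimately show ?thesis by simp
  qed
  have tot: "(\<Sum>i\<in>I. \<Sum>j\<in>I. g i j) \<le> real K * R"
  proof -
    have "(\<Sum>i\<in>I. \<Sum>j\<in>I. g i j) \<le> (\<Sum>i\<in>I. R)" using row I_def by (intro sum_mono) auto
    also have "\<dots> = real K * R" unfolding I_def by simp
    finally show ?thesis .
  qed
  have tot0: "(\<Sum>i\<in>I. \<Sum>j\<in>I. g i j) \<ge> 0" using g0 by (intro sum_nonneg) auto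
  have "var (Sdist K d) (\<lambda>A. \<Sum>i\<in>{1..K}. \<Sum>j\<in>{1..K}. of_bool (i \<in> A) * of_bool (j \<in> A) * c i j)
     = (\<Sum>i\<in>I. \<Sum>j\<in>I. \<Sum>k\<in>I. \<Sum>l\<in>I. c i j * c k l * e i j k l)"
    unfolding e_def I_def by (rule var_T_formula[OF dK])
  also have "\<dots> \<le> (\<Sum>i\<in>I. \<Sum>j\<in>I. \<Sum>k\<in>I. \<Sum>l\<in>I. g i j * g k l * (2 * ov i j k l + 2 * DK K))"
  proof (intro sum_mono)
    fix i j k l assume h: "i \<in> I" "j \<in> I" "k \<in> I" "l \<in> I"
    have "c i j * c k l * e i j k l \<le> \<bar>c i j\<bar> * \<bar>c k l\<bar> * \<bar>e i j k l\<bar>"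
      by (simp add: abs_mult[symmetric])
    also have "\<dots> \<le> g i j * g k l * (2 * ov i j k l + 2 * DK K)"
    proof (rule mult_mono)
      have hh: "i \<in> {1..K}" "j \<in> {1..K}" "k \<in> {1..K}" "l \<in> {1..K}" using h I_def by auto
      show "\<bar>e i j k l\<bar> \<le> 2 * ov i j k l + 2 * DK K"
        unfolding e_def ov_def by (rule e_bound[OF hh K6 dK])
      show "\<bar>c i j\<bar> * \<bar>c k l\<bar> \<le> g i j * g k l"
        using cg[OF hh(1,2)] cg[OF hh(3,4)] by (intro mult_mono) auto
      show "0 \<le> g i j * g k l" using g0 h by simp
    qed simp
    finally show "c i j * c k l * e i j k l \<le> g i j * g k l * (2 * ov i j k l + 2 * DK K)" .
  qed
  also have "\<dots> = (\<Sum>i\<in>I. \<Sum>j\<in>I. \<Sum>k\<in>I. \<Sum>l\<in>I. 2 * (g i j * (g k l * ov i j k l)))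
        + (\<Sum>i\<in>I. \<Sum>j\<in>I. \<Sum>k\<in>I. \<Sum>l\<in>I. 2 * (DK K * (g k l * g i j)))"
  proof -
    have pw: "g i j * g k l * (2 * ov i j k l + 2 * DK K) = 2 * (g i j * (g k l * ov i j k l)) + 2 * (DK K * (g k l * g i j))" for i j k l
      by (simp add: algebra_simps)
    show ?thesis by (simp only: pw sum.distrib)
  qed
  also have "\<dots> = 2 * (\<Sum>i\<in>I. \<Sum>j\<in>I. g i j * (\<Sum>k\<in>I. \<Sum>l\<in>I. g k l * ov i j k l))
        + 2 * DK K * ((\<Sum>i\<in>I. \<Sum>j\<in>I. g i j) * (\<Sum>k\<in>I. \<Sum>l\<in>I. g k l))"
    by (simp only: sum_distrib_left sum_distrib_right mult.assoc)
  also have "\<dots> \<le> 2 * (\<Sum>i\<in>I. \<Sum>j\<in>I. g i j * (4 * R)) + 2 * DK K * ((real K * R) * (real K * R))"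
  proof (intro add_mono mult_left_mono sum_mono mult_mono)
    fix i j assume "i \<in> I" "j \<in> I"
    have rowI: "\<And>k. k \<in> I \<Longrightarrow> (\<Sum>l\<in>I. g k l) \<le> R" using row I_def by simp
    have colI: "\<And>l. l \<in> I \<Longrightarrow> (\<Sum>k\<in>I. g k l) \<le> R" using col I_def by simp
    show "(\<Sum>k\<in>I. \<Sum>l\<in>I. g k l * ov i j k l) \<le> 4 * R"
      unfolding ov_def by (rule ov_sum[OF fin \<open>i \<in> I\<close> \<open>j \<in> I\<close> g0 rowI colI])
  qed (use tot tot0 g0 DK_nonneg[of K] R0 in auto)
  also have "2 * (\<Sum>i\<in>I. \<Sum>j\<in>I. g i j * (4 * R)) = 8 * R * (\<Sum>i\<in>I. \<Sum>j\<in>I. g i j)"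
    unfolding sum_distrib_left by (intro sum.cong refl) simp
  also have "\<dots> \<le> 8 * R * (real K * R)" using tot R0 by (intro mult_left_mono) auto
  finally show ?thesis by (simp add: power2_eq_square algebra_simps)
qed



lemma sum_inj_le:
  fixes h :: "nat \<Rightarrow> real"
  assumes "finite N" "inj_on \<phi> J" "\<phi> ` J \<subseteq> N" "\<And>n. h n \<ge> 0"
  shows "(\<Sum>j\<in>J. h (\<phi> j)) \<le> (\<Sum>n\<in>N. h n)"
proof -
  have "(\<Sum>j\<in>J. h (\<phi> j)) = (\<Sum>n\<in>\<phi> ` J. h n)" using assms(2) by (simp add: sum.reindex)
  also have "\<dots> \<le> (\<Sum>n\<in>N. h n)" using assms by (intro sum_mono2) auto
  finally show ?thesis .
qed

lemma geom_le:
  fixes a :: real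
  assumes "0 \<le> a" "a < 1"
  shows "(\<Sum>n<N. a^n) \<le> 1 / (1 - a)"
proof -
  have "(\<Sum>n<N. a^n) = (1 - a^N) / (1 - a)" using assms by (simp add: sum_gp_strict)
  also have "\<dots> \<le> 1 / (1 - a)" using assms by (intro divide_right_mono) auto
  finally show ?thesis .
qed

lemma row_bound:
  fixes a :: real
  assumes "0 \<le> a" "a < 1" "i \<le> K"
  shows "(\<Sum>j\<in>{1..K}. a ^ nat \<bar>int i - int j\<bar>) \<le> 2 / (1 - a)"
proof -
  have eq: "a ^ nat \<bar>int i - int j\<bar> = (if j \<le> i then a ^ (i - j) else a ^ (j - i))" for j
    by (cases "j \<le> i") (auto simp: nat_diff_distrib')
  have "(\<Sum>j\<in>{1..K}. a ^ nat \<bar>int i - int j\<bar>) =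
     (\<Sum>j\<in>{1..K} \<inter> {j. j \<le> i}. a ^ (i - j)) + (\<Sum>j\<in>{1..K} \<inter> - {j. j \<le> i}. a ^ (j - i))"
    unfolding eq by (rule sum.If_cases) simp
  also have "(\<Sum>j\<in>{1..K} \<inter> {j. j \<le> i}. a ^ (i - j)) \<le> (\<Sum>n<Suc K. a^n)"
  proof (rule sum_inj_le[where h = "\<lambda>n. a^n" and \<phi> = "\<lambda>j. i - j"])
    show "inj_on (\<lambda>j. i - j) ({1..K} \<inter> {j. j \<le> i})" by (auto simp: inj_on_def)
    show "(\<lambda>j. i - j) ` ({1..K} \<inter> {j. j \<le> i}) \<subseteq> {..<Suc K}" using assms(3) by auto
  qed (use assms(1,2) in auto)
  also have "(\<Sum>j\<in>{1..K} \<inter> - {j. j \<le> i}. a ^ (j - i)) \<le> (\<Sum>n<Suc K. a^n)"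
  proof (rule sum_inj_le[where h = "\<lambda>n. a^n" and \<phi> = "\<lambda>j. j - i"])
    show "inj_on (\<lambda>j. j - i) ({1..K} \<inter> - {j. j \<le> i})" by (auto simp: inj_on_def)
    show "(\<lambda>j. j - i) ` ({1..K} \<inter> - {j. j \<le> i}) \<subseteq> {..<Suc K}" by auto
  qed (use assms(1,2) in auto)
  finally show ?thesis using geom_le[OF assms(1,2), of "Suc K"] by simp
qed



lemma var_compl:
  fixes F :: "nat set \<Rightarrow> real"
  assumes "d \<le> K"
  shows "var (Sdist K d) (\<lambda>A. F ({1..K} - A)) = var (Sdist K (K - d)) F"
proof -
  define \<phi> where "\<phi> A = {1..K} - A" for A :: "nat set"
  have inj: "inj_on \<phi> (SS K d)" unfolding \<phi>_def inj_on_def by blast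
  have img: "\<phi> ` SS K d = SS K (K - d)"
  proof
    show "\<phi> ` SS K d \<subseteq> SS K (K - d)"
    proof
      fix x assume "x \<in> \<phi> ` SS K d"
      then obtain A where A: "A \<subseteq> {1..K}" "card A = d" "x = {1..K} - A" unfolding \<phi>_def by auto
      have "finite A" using A(1) finite_subset by blast
      then show "x \<in> SS K (K - d)" using A by (simp add: card_Diff_subset)
    qed
    show "SS K (K - d) \<subseteq> \<phi> ` SS K d"
    proof
      fix x assume x: "x \<in> SS K (K - d)"
      have "finite x" using x finite_subset by blast
      then have "card ({1..K} - x) = d" using x assms by (simp add: card_Diff_subset)
      moreover have "x = \<phi> ({1..K} - x)" using x unfolding \<phi>_def by auto
      ultimately show "x \<in> \<phi> ` SS K d" using x by auto
    qed
  qed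
  have mp: "map_pmf \<phi> (pmf_of_set (SS K d)) = pmf_of_set (SS K (K - d))"
    using map_pmf_of_set_inj[OF inj SS_ne[OF assms] SS_fin] img by simp
  have "var (Sdist K (K - d)) F = var (measure_pmf (map_pmf \<phi> (pmf_of_set (SS K d)))) F"
    unfolding mp Sdist_def ..
  also have "\<dots> = var (Sdist K d) (\<lambda>A. F (\<phi> A))"
    unfolding var_def Sdist_def by simp
  finally show ?thesis unfolding \<phi>_def by simp
qed



lemma sq_le_from_abs:
  fixes x y :: real
  assumes "\<bar>x\<bar> \<le> y"
  shows "x^2 \<le> y^2"
proof -
  have "\<bar>x\<bar>^2 \<le> y^2" using assms by (intro power_mono) auto
  then show ?thesis by simp
qed

lemma amgm2: "\<bar>x\<bar> * \<bar>y\<bar> \<le> (x^2 + y^2) / 2" for x y :: real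
proof -
  have "0 \<le> (\<bar>x\<bar> - \<bar>y\<bar>)^2" by simp
  then have "0 \<le> \<bar>x\<bar>^2 + \<bar>y\<bar>^2 - 2 * (\<bar>x\<bar> * \<bar>y\<bar>)" by (simp add: power2_diff)
  then show ?thesis by simp
qed

lemma DK_le: "6 \<le> K \<Longrightarrow> DK K \<le> 12 / real K"
proof -
  assume K6: "6 \<le> K"
  have k: "real K \<ge> 6" using K6 by simp
  have h: "real K / 2 \<le> real K - 3" using k by simp
  have "(real K / 2)^2 \<le> (real K - 3)^2" using h k by (intro power_mono) auto
  then have "3 * real K / (real K - 3)^2 \<le> 3 * real K / (real K / 2)^2"
    using k by (intro divide_left_mono) auto
  also have "\<dots> = 12 / real K" using k by (simp add: power2_eq_square field_simps)
  finally show ?thesis unfolding DK_def .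
qed

lemma S_var_bound:
  fixes c :: "nat \<Rightarrow> nat \<Rightarrow> real" and a B :: real
  assumes K6: "6 \<le> K" and dK: "d \<le> K" and a: "0 \<le> a" "a < 1" and B: "0 \<le> B"
    and hc: "\<And>i j. i \<in> {1..K} \<Longrightarrow> j \<in> {1..K} \<Longrightarrow> \<bar>c i j\<bar> \<le> B / real K * a ^ nat \<bar>int i - int j\<bar>"
  shows "var (Sdist K d) (\<lambda>A. \<Sum>i\<in>{1..K}. \<Sum>j\<in>{1..K}. of_bool (i \<in> A) * of_bool (j \<in> A) * c i j)
          \<le> 32 * (B * (2 / (1 - a)))^2 / real K"
proof -
  define G where "G = 2 / (1 - a)"
  define R where "R = B / real K * G"
  have G0: "G \<ge> 0" using a unfolding G_def by simp
  have BK: "B / real K \<ge> 0" using B by simp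
  have row: "(\<Sum>l\<in>{1..K}. B / real K * a ^ nat \<bar>int k - int l\<bar>) \<le> R" if "k \<in> {1..K}" for k
  proof -
    have "(\<Sum>l\<in>{1..K}. B / real K * a ^ nat \<bar>int k - int l\<bar>) = B / real K * (\<Sum>l\<in>{1..K}. a ^ nat \<bar>int k - int l\<bar>)"
      by (simp add: sum_distrib_left)
    also have "\<dots> \<le> B / real K * G"
      unfolding G_def using row_bound[OF a, of k K] that BK by (intro mult_left_mono) auto
    finally show ?thesis unfolding R_def .
  qed
  have col: "(\<Sum>k\<in>{1..K}. B / real K * a ^ nat \<bar>int k - int l\<bar>) \<le> R" if "l \<in> {1..K}" for l
  proof -
    have "(\<Sum>k\<in>{1..K}. B / real K * a ^ nat \<bar>int k - int l\<bar>) = (\<Sum>k\<in>{1..K}. B / real K * a ^ nat \<bar>int l - int k\<bar>)"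
      by (simp add: abs_minus_commute)
    also have "\<dots> \<le> R" by (rule row[OF that])
    finally show ?thesis .
  qed
  have "var (Sdist K d) (\<lambda>A. \<Sum>i\<in>{1..K}. \<Sum>j\<in>{1..K}. of_bool (i \<in> A) * of_bool (j \<in> A) * c i j)
          \<le> 8 * real K * R^2 + 2 * DK K * (real K * R)^2"
    by (rule var_bound[OF K6 dK hc row col])
  also have "\<dots> \<le> 8 * real K * R^2 + 2 * (12 / real K) * (real K * R)^2"
    using DK_le[OF K6] by (intro add_left_mono mult_right_mono mult_left_mono) auto
  also have "\<dots> = 32 * (B * G)^2 / real K"
    using K6 unfolding R_def by (simp add: power2_eq_square field_simps)
  finally show ?thesis unfolding G_def .
qed

lemma var_nonneg: "var M f \<ge> 0"
  unfolding var_def by (rule Bochner_Integration.integral_nonneg) simp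



theorem mainTheorem9:
  fixes M :: "nat \<Rightarrow> 'a measure"
    and W :: "nat \<Rightarrow> nat \<Rightarrow> 'a \<Rightarrow> real"
    and \<pi> :: "nat \<Rightarrow> nat \<Rightarrow> real"
    and d1 :: "nat \<Rightarrow> nat"
    and r \<rho> :: real
  assumes prob: "\<And>K. prob_space (M K)"
    and meas: "\<And>K i. i \<in> {1..K} \<Longrightarrow> W K i \<in> borel_measurable (M K)"
    and sq_int: "\<And>K i. i \<in> {1..K} \<Longrightarrow> integrable (M K) (\<lambda>x. (W K i x)^2)"
    and S_d1: "\<And>K. d1 K \<le> K"
    and L1: "filterlim d1 at_top sequentially"
    and L2: "(\<lambda>K. real (K - d1 K) / real (d1 K)) \<longlonglongrightarrow> r" and r_pos: "0 < r"
    and rho: "-1 < \<rho>" "\<rho> < 1"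
    and AR1: "\<And>K i j. i \<in> {1..K} \<Longrightarrow> j \<in> {1..K} \<Longrightarrow>
               cov (M K) (W K i) (W K j) = \<rho> ^ nat \<bar>int i - int j\<bar>"
    and AR2: "\<exists>C. \<forall>K. \<forall>i\<in>{1..K}. \<bar>\<pi> K i\<bar> \<le> C / sqrt (real K)"
    and AR3: "\<exists>l::ereal. ((\<lambda>K. ereal ((\<Sum>i\<in>{1..K}. \<Sum>j\<in>{1..K}-{i}.
                  \<pi> K i * \<pi> K j * \<rho> ^ nat \<bar>int i - int j\<bar>) / (\<Sum>i\<in>{1..K}. (\<pi> K i)^2)))
                \<longlongrightarrow> l) sequentially"
    and AR4: "\<exists>\<epsilon>>0. \<forall>K\<ge>1. var (M K) (\<lambda>x. \<Sum>i\<in>{1..K}. \<pi> K i * W K i x) > \<epsilon>"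
  shows
    "(\<exists>\<epsilon> Mb. 0 < \<epsilon> \<and> \<epsilon> \<le> Mb \<and> (\<forall>K\<ge>1.
        \<epsilon> \<le> var (M K) (\<lambda>x. \<Sum>i\<in>{1..K}. \<pi> K i * W K i x) \<and>
        var (M K) (\<lambda>x. \<Sum>i\<in>{1..K}. \<pi> K i * W K i x) \<le> Mb))
   \<and> (\<lambda>K. var (Sdist K (d1 K)) (\<lambda>A. \<Sum>i\<in>{1..K}. \<Sum>j\<in>{1..K}.
          of_bool (i \<in> A) * of_bool (j \<in> A) *
          cov (M K) (\<lambda>x. \<pi> K i * W K i x) (\<lambda>x. \<pi> K j * W K j x))) \<longlonglongrightarrow> 0
   \<and> (\<lambda>K. var (Sdist K (d1 K)) (\<lambda>A. \<Sum>i\<in>{1..K}. \<Sum>j\<in>{1..K}.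
          (1 - of_bool (i \<in> A)) * (1 - of_bool (j \<in> A)) *
          cov (M K) (\<lambda>x. \<pi> K i * W K i x) (\<lambda>x. \<pi> K j * W K j x))) \<longlonglongrightarrow> 0
   \<and> convergent (\<lambda>K. (\<Sum>i\<in>{1..K}. var (M K) (\<lambda>x. \<pi> K i * W K i x))
                      / var (M K) (\<lambda>x. \<Sum>i\<in>{1..K}. \<pi> K i * W K i x))"
proof -
  obtain C where hC: "\<forall>K. \<forall>i\<in>{1..K}. \<bar>\<pi> K i\<bar> \<le> C / sqrt (real K)" using AR2 by blast
  obtain \<epsilon> where \<epsilon>0: "\<epsilon> > 0" and h\<epsilon>: "\<forall>K\<ge>1. var (M K) (\<lambda>x. \<Sum>i\<in>{1..K}. \<pi> K i * W K i x) > \<epsilon>"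
    using AR4 by blast
  obtain l :: ereal where hl: "((\<lambda>K. ereal ((\<Sum>i\<in>{1..K}. \<Sum>j\<in>{1..K}-{i}.
                  \<pi> K i * \<pi> K j * \<rho> ^ nat \<bar>int i - int j\<bar>) / (\<Sum>i\<in>{1..K}. (\<pi> K i)^2)))
                \<longlongrightarrow> l) sequentially" using AR3 by blast
  define a where "a = \<bar>\<rho>\<bar>"
  have a0: "0 \<le> a" and a1: "a < 1" using rho by (auto simp: a_def)
  define G where "G = 2 / (1 - a)"
  have G0: "G \<ge> 0" using a1 by (simp add: G_def)
  define B where "B = C^2"
  have B0: "B \<ge> 0" by (simp add: B_def)
  have pi_prod: "\<bar>\<pi> K i * \<pi> K j\<bar> \<le> B / real K" if "i \<in> {1..K}" "j \<in> {1..K}" for K i j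
  proof -
    have hi: "\<bar>\<pi> K i\<bar> \<le> C / sqrt (real K)" and hj: "\<bar>\<pi> K j\<bar> \<le> C / sqrt (real K)" using hC that by auto
    have c0: "0 \<le> C / sqrt (real K)" using hi abs_ge_zero order_trans by blast
    have "\<bar>\<pi> K i * \<pi> K j\<bar> \<le> (C / sqrt (real K)) * (C / sqrt (real K))"
      unfolding abs_mult using hi hj c0 by (intro mult_mono) auto
    also have "\<dots> = B / real K" using that by (simp add: B_def power2_eq_square)
    finally show ?thesis .
  qed
  have cov_eq: "cov (M K) (\<lambda>x. \<pi> K i * W K i x) (\<lambda>x. \<pi> K j * W K j x) = \<pi> K i * \<pi> K j * \<rho> ^ nat \<bar>int i - int j\<bar>"
    if "i \<in> {1..K}" "j \<in> {1..K}" for K i j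
    using cov_scale[of "M K" "\<pi> K i" "W K i" "\<pi> K j" "W K j"] AR1[OF that] by simp
  have hc: "\<bar>cov (M K) (\<lambda>x. \<pi> K i * W K i x) (\<lambda>x. \<pi> K j * W K j x)\<bar> \<le> B / real K * a ^ nat \<bar>int i - int j\<bar>"
    if "i \<in> {1..K}" "j \<in> {1..K}" for K i j
  proof -
    have "\<bar>cov (M K) (\<lambda>x. \<pi> K i * W K i x) (\<lambda>x. \<pi> K j * W K j x)\<bar> = \<bar>\<pi> K i * \<pi> K j\<bar> * a ^ nat \<bar>int i - int j\<bar>"
      unfolding cov_eq[OF that] a_def by (simp add: abs_mult power_abs)
    also have "\<dots> \<le> B / real K * a ^ nat \<bar>int i - int j\<bar>"
      using pi_prod[OF that] a0 by (intro mult_right_mono) auto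
    finally show ?thesis .
  qed
  have bnd: "var (Sdist K d) (\<lambda>A. \<Sum>i\<in>{1..K}. \<Sum>j\<in>{1..K}. of_bool (i \<in> A) * of_bool (j \<in> A) *
          cov (M K) (\<lambda>x. \<pi> K i * W K i x) (\<lambda>x. \<pi> K j * W K j x)) \<le> 32 * (B * G)^2 / real K"
    if "6 \<le> K" "d \<le> K" for K d
    unfolding G_def by (rule S_var_bound[OF that a0 a1 B0 hc])
  have P2: "(\<lambda>K. var (Sdist K (d1 K)) (\<lambda>A. \<Sum>i\<in>{1..K}. \<Sum>j\<in>{1..K}.
          of_bool (i \<in> A) * of_bool (j \<in> A) *
          cov (M K) (\<lambda>x. \<pi> K i * W K i x) (\<lambda>x. \<pi> K j * W K j x))) \<longlonglongrightarrow> 0"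
  proof (rule tendsto_sandwich[of "\<lambda>_. 0" _ _ "\<lambda>K. 32 * (B * G)^2 / real K"])
    show "\<forall>\<^sub>F K in sequentially. 0 \<le> var (Sdist K (d1 K)) (\<lambda>A. \<Sum>i\<in>{1..K}. \<Sum>j\<in>{1..K}.
          of_bool (i \<in> A) * of_bool (j \<in> A) *
          cov (M K) (\<lambda>x. \<pi> K i * W K i x) (\<lambda>x. \<pi> K j * W K j x))" by (simp add: var_nonneg)
    show "\<forall>\<^sub>F K in sequentially. var (Sdist K (d1 K)) (\<lambda>A. \<Sum>i\<in>{1..K}. \<Sum>j\<in>{1..K}.
          of_bool (i \<in> A) * of_bool (j \<in> A) *
          cov (M K) (\<lambda>x. \<pi> K i * W K i x) (\<lambda>x. \<pi> K j * W K j x)) \<le> 32 * (B * G)^2 / real K"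
      using eventually_ge_at_top[of "6::nat"] by eventually_elim (rule bnd[OF _ S_d1])
  qed (auto intro: lim_const_over_n)
  have P3: "(\<lambda>K. var (Sdist K (d1 K)) (\<lambda>A. \<Sum>i\<in>{1..K}. \<Sum>j\<in>{1..K}.
          (1 - of_bool (i \<in> A)) * (1 - of_bool (j \<in> A)) *
          cov (M K) (\<lambda>x. \<pi> K i * W K i x) (\<lambda>x. \<pi> K j * W K j x))) \<longlonglongrightarrow> 0"
  proof (rule tendsto_sandwich[of "\<lambda>_. 0" _ _ "\<lambda>K. 32 * (B * G)^2 / real K"])
    show "\<forall>\<^sub>F K in sequentially. 0 \<le> var (Sdist K (d1 K)) (\<lambda>A. \<Sum>i\<in>{1..K}. \<Sum>j\<in>{1..K}.
          (1 - of_bool (i \<in> A)) * (1 - of_bool (j \<in> A)) *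
          cov (M K) (\<lambda>x. \<pi> K i * W K i x) (\<lambda>x. \<pi> K j * W K j x))" by (simp add: var_nonneg)
    show "\<forall>\<^sub>F K in sequentially. var (Sdist K (d1 K)) (\<lambda>A. \<Sum>i\<in>{1..K}. \<Sum>j\<in>{1..K}.
          (1 - of_bool (i \<in> A)) * (1 - of_bool (j \<in> A)) *
          cov (M K) (\<lambda>x. \<pi> K i * W K i x) (\<lambda>x. \<pi> K j * W K j x)) \<le> 32 * (B * G)^2 / real K"
      using eventually_ge_at_top[of "6::nat"]
    proof eventually_elim
      case (elim K)
      define T where "T A' = (\<Sum>i\<in>{1..K}. \<Sum>j\<in>{1..K}. of_bool (i \<in> A') * of_bool (j \<in> A') *
          cov (M K) (\<lambda>x. \<pi> K i * W K i x) (\<lambda>x. \<pi> K j * W K j x))" for A'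
      have fe: "(\<lambda>A. \<Sum>i\<in>{1..K}. \<Sum>j\<in>{1..K}.
          (1 - of_bool (i \<in> A)) * (1 - of_bool (j \<in> A)) *
          cov (M K) (\<lambda>x. \<pi> K i * W K i x) (\<lambda>x. \<pi> K j * W K j x)) = (\<lambda>A. T ({1..K} - A))"
        unfolding T_def by (intro ext sum.cong refl) auto
      have "var (Sdist K (d1 K)) (\<lambda>A. T ({1..K} - A)) = var (Sdist K (K - d1 K)) T"
        by (rule var_compl[OF S_d1])
      also have "\<dots> \<le> 32 * (B * G)^2 / real K" unfolding T_def using elim by (intro bnd) auto
      finally show ?case unfolding fe .
    qed
  qed (auto intro: lim_const_over_n)
  define s where "s K = var (M K) (\<lambda>x. \<Sum>i\<in>{1..K}. \<pi> K i * W K i x)" for K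
  define Q where "Q K = (\<Sum>i\<in>{1..K}. (\<pi> K i)^2)" for K
  define Off where "Off K = (\<Sum>i\<in>{1..K}. \<Sum>j\<in>{1..K}-{i}. \<pi> K i * \<pi> K j * \<rho> ^ nat \<bar>int i - int j\<bar>)" for K
  have s_eq: "s K = (\<Sum>i\<in>{1..K}. \<Sum>j\<in>{1..K}. \<pi> K i * \<pi> K j * \<rho> ^ nat \<bar>int i - int j\<bar>)" for K
  proof -
    have "s K = (\<Sum>i\<in>{1..K}. \<Sum>j\<in>{1..K}. \<pi> K i * \<pi> K j * cov (M K) (W K i) (W K j))"
      unfolding s_def by (rule var_sum[OF prob]) (auto intro: meas sq_int)
    also have "\<dots> = (\<Sum>i\<in>{1..K}. \<Sum>j\<in>{1..K}. \<pi> K i * \<pi> K j * \<rho> ^ nat \<bar>int i - int j\<bar>)"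
      by (intro sum.cong refl) (simp add: AR1)
    finally show ?thesis .
  qed
  have P_eq: "(\<Sum>i\<in>{1..K}. var (M K) (\<lambda>x. \<pi> K i * W K i x)) = Q K" for K
    unfolding Q_def
  proof (intro sum.cong refl)
    fix i assume i: "i \<in> {1..K}"
    show "var (M K) (\<lambda>x. \<pi> K i * W K i x) = (\<pi> K i)^2"
      unfolding var_cov using cov_eq[OF i i] by (simp add: power2_eq_square)
  qed
  have Off_eq: "Off K = s K - Q K" for K
  proof -
    have "s K = (\<Sum>i\<in>{1..K}. (\<pi> K i)^2 + (\<Sum>j\<in>{1..K}-{i}. \<pi> K i * \<pi> K j * \<rho> ^ nat \<bar>int i - int j\<bar>))"
      unfolding s_eq
    proof (intro sum.cong refl)
      fix i assume i: "i \<in> {1..K}"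
      show "(\<Sum>j\<in>{1..K}. \<pi> K i * \<pi> K j * \<rho> ^ nat \<bar>int i - int j\<bar>) =
        (\<pi> K i)^2 + (\<Sum>j\<in>{1..K}-{i}. \<pi> K i * \<pi> K j * \<rho> ^ nat \<bar>int i - int j\<bar>)"
        using sum.remove[of "{1..K}" i "\<lambda>j. \<pi> K i * \<pi> K j * \<rho> ^ nat \<bar>int i - int j\<bar>"] i
        by (simp add: power2_eq_square)
    qed
    then show ?thesis unfolding Off_def Q_def by (simp add: sum.distrib)
  qed
  have sQ: "s K \<le> G * Q K" for K
  proof -
    define e where "e i j = a ^ nat \<bar>int i - int j\<bar>" for i j :: nat
    have e0: "e i j \<ge> 0" for i j unfolding e_def using a0 by simp
    have "s K \<le> (\<Sum>i\<in>{1..K}. \<Sum>j\<in>{1..K}. ((\<pi> K i)^2 / 2) * e i j + ((\<pi> K j)^2 / 2) * e i j)"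
      unfolding s_eq
    proof (intro sum_mono)
      fix i j
      have "\<pi> K i * \<pi> K j * \<rho> ^ nat \<bar>int i - int j\<bar> \<le> \<bar>\<pi> K i\<bar> * \<bar>\<pi> K j\<bar> * e i j"
        unfolding e_def a_def by (simp add: abs_mult[symmetric] power_abs[symmetric])
      also have "\<dots> \<le> (((\<pi> K i)^2 + (\<pi> K j)^2) / 2) * e i j"
        using amgm2 e0 by (intro mult_right_mono) auto
      finally show "\<pi> K i * \<pi> K j * \<rho> ^ nat \<bar>int i - int j\<bar> \<le> ((\<pi> K i)^2 / 2) * e i j + ((\<pi> K j)^2 / 2) * e i j"
        by (simp add: field_simps)
    qed
    also have "\<dots> = (\<Sum>i\<in>{1..K}. ((\<pi> K i)^2 / 2) * (\<Sum>j\<in>{1..K}. e i j)) + (\<Sum>j\<in>{1..K}. ((\<pi> K j)^2 / 2) * (\<Sum>i\<in>{1..K}. e i j))"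
      by (simp only: sum.distrib sum_distrib_left sum.swap[of "\<lambda>i j. (\<pi> K j)^2 / 2 * e i j"])
    also have "\<dots> \<le> (\<Sum>i\<in>{1..K}. ((\<pi> K i)^2 / 2) * G) + (\<Sum>j\<in>{1..K}. ((\<pi> K j)^2 / 2) * G)"
    proof (intro add_mono sum_mono mult_left_mono)
      fix i assume "i \<in> {1..K}"
      then show "(\<Sum>j\<in>{1..K}. e i j) \<le> G" unfolding e_def G_def by (intro row_bound[OF a0 a1]) auto
    next
      fix j assume "j \<in> {1..K}"
      have "(\<Sum>i\<in>{1..K}. e i j) = (\<Sum>i\<in>{1..K}. a ^ nat \<bar>int j - int i\<bar>)"
        unfolding e_def by (simp add: abs_minus_commute)
      also have "\<dots> \<le> G" unfolding G_def using \<open>j \<in> {1..K}\<close> by (intro row_bound[OF a0 a1]) auto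
      finally show "(\<Sum>i\<in>{1..K}. e i j) \<le> G" .
    qed auto
    also have "\<dots> = G * Q K" unfolding Q_def by (simp add: sum_distrib_left sum_distrib_right field_simps sum.distrib[symmetric])
    finally show ?thesis .
  qed
  have QB: "Q K \<le> B" if "K \<ge> 1" for K
  proof -
    have "Q K \<le> (\<Sum>i\<in>{1..K}. B / real K)" unfolding Q_def
    proof (intro sum_mono)
      fix i assume i: "i \<in> {1..K}"
      have "(\<pi> K i)^2 = \<bar>\<pi> K i * \<pi> K i\<bar>" by (simp add: power2_eq_square abs_mult abs_mult_self_eq)
      also have "\<dots> \<le> B / real K" by (rule pi_prod[OF i i])
      finally show "(\<pi> K i)^2 \<le> B / real K" .
    qed
    also have "\<dots> = B" using that by simp
    finally show ?thesis .
  qed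
  have s\<epsilon>: "\<epsilon> < s K" if "K \<ge> 1" for K using h\<epsilon> that unfolding s_def by auto
  have Qpos: "Q K > 0" if "K \<ge> 1" for K
  proof (rule ccontr)
    assume "\<not> Q K > 0"
    then have "G * Q K \<le> 0" using G0 by (simp add: mult_nonneg_nonpos)
    then show False using sQ[of K] s\<epsilon>[OF that] \<epsilon>0 by linarith
  qed
  have Bpos: "B > 0" using QB[of 1] Qpos[of 1] by simp
  have part1: "\<exists>\<epsilon> Mb. 0 < \<epsilon> \<and> \<epsilon> \<le> Mb \<and> (\<forall>K\<ge>1.
        \<epsilon> \<le> var (M K) (\<lambda>x. \<Sum>i\<in>{1..K}. \<pi> K i * W K i x) \<and>
        var (M K) (\<lambda>x. \<Sum>i\<in>{1..K}. \<pi> K i * W K i x) \<le> Mb)"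
  proof (intro exI conjI allI impI)
    show "0 < \<epsilon>" by (rule \<epsilon>0)
    have sGB: "s K \<le> G * B" if "K \<ge> 1" for K
      using sQ[of K] QB[OF that] G0 by (meson mult_left_mono order_trans)
    show "\<epsilon> \<le> G * B" using s\<epsilon>[of 1] sGB[of 1] by simp
    fix K :: nat assume K: "K \<ge> 1"
    show "\<epsilon> \<le> var (M K) (\<lambda>x. \<Sum>i\<in>{1..K}. \<pi> K i * W K i x)" using s\<epsilon>[OF K] unfolding s_def by simp
    show "var (M K) (\<lambda>x. \<Sum>i\<in>{1..K}. \<pi> K i * W K i x) \<le> G * B" using sGB[OF K] unfolding s_def .
  qed
  define Rt where "Rt K = Off K / Q K" for K
  have Rt_eq: "Rt K = s K / Q K - 1" if "K \<ge> 1" for K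
    using Qpos[OF that] unfolding Rt_def Off_eq by (simp add: field_simps)
  have Rt_up: "Rt K \<le> G - 1" if "K \<ge> 1" for K
    using sQ[of K] Qpos[OF that] unfolding Rt_eq[OF that] by (simp add: divide_le_eq mult.commute)
  have Rt_lo: "\<epsilon> / B - 1 \<le> Rt K" if "K \<ge> 1" for K
  proof -
    have "\<epsilon> / B \<le> \<epsilon> / Q K" using QB[OF that] Qpos[OF that] \<epsilon>0 by (intro divide_left_mono) auto
    also have "\<dots> \<le> s K / Q K" using s\<epsilon>[OF that] Qpos[OF that] by (intro divide_right_mono) auto
    finally show ?thesis unfolding Rt_eq[OF that] by simp
  qed
  have hl': "((\<lambda>K. ereal (Rt K)) \<longlongrightarrow> l) sequentially" using hl unfolding Rt_def Off_def Q_def .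
  have lup: "l \<le> ereal (G - 1)"
  proof (rule tendsto_upperbound[OF hl'])
    show "\<forall>\<^sub>F K in sequentially. ereal (Rt K) \<le> ereal (G - 1)"
      using eventually_ge_at_top[of "1::nat"] by eventually_elim (simp add: Rt_up)
  qed simp
  have llo: "ereal (\<epsilon> / B - 1) \<le> l"
  proof (rule tendsto_lowerbound[OF hl'])
    show "\<forall>\<^sub>F K in sequentially. ereal (\<epsilon> / B - 1) \<le> ereal (Rt K)"
      using eventually_ge_at_top[of "1::nat"] by eventually_elim (simp add: Rt_lo)
  qed simp
  obtain L where lL: "l = ereal L" using lup llo by (cases l) auto
  have RtL: "Rt \<longlonglongrightarrow> L" using hl' unfolding lL by simp
  have Lpos: "1 + L > 0"
  proof -
    have "\<epsilon> / B - 1 \<le> L" using llo unfolding lL by simp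
    moreover have "\<epsilon> / B > 0" using \<epsilon>0 Bpos by simp
    ultimately show ?thesis by linarith
  qed
  have lim4: "(\<lambda>K. 1 / (1 + Rt K)) \<longlonglongrightarrow> 1 / (1 + L)"
    using Lpos by (intro tendsto_intros RtL) auto
  have ev4: "\<forall>\<^sub>F K in sequentially. 1 / (1 + Rt K) = (\<Sum>i\<in>{1..K}. var (M K) (\<lambda>x. \<pi> K i * W K i x))
                      / var (M K) (\<lambda>x. \<Sum>i\<in>{1..K}. \<pi> K i * W K i x)"
    using eventually_ge_at_top[of "1::nat"]
  proof eventually_elim
    case (elim K)
    have "1 + Rt K = s K / Q K" using Rt_eq[OF elim] by simp
    then show ?case unfolding P_eq s_def[symmetric] using Qpos[OF elim] s\<epsilon>[OF elim] \<epsilon>0 by simp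
  qed
  have part4: "convergent (\<lambda>K. (\<Sum>i\<in>{1..K}. var (M K) (\<lambda>x. \<pi> K i * W K i x))
                      / var (M K) (\<lambda>x. \<Sum>i\<in>{1..K}. \<pi> K i * W K i x))"
    using Lim_transform_eventually[OF lim4 ev4] by (rule convergentI)
  show ?thesis using part1 P2 P3 part4 by blast
qed


end
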